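(* Let $\Phi_W$ be a pmf on a countable set $\mathcal W$, $\Phi_{U|W}$ a conditional pmf on a countable $\mathcal U$, and $\Phi_{V|W,U}$ a channel to a countable $\mathcal V$; let $\Phi$ denote the joint $\Phi_W\Phi_{U|W}\Phi_{V|W,U}$ and $Q_V=\Phi_V$ its $V$-marginal. Let $\{U(w)\}_{w\in\mathcal W}$ be a random codebook with the $U(w)$ mutually independent and $U(w)\sim\Phi_{U|W=w}$, and let $P_V(v)=\sum_{w}\Phi_W(w)\Phi_{V|W,U}(v|w,U(w))$. Then for every $\tau\in\mathbb R$, $$\mathbf E\|P_V-Q_V\|_{TV}\le\mathbf P_\Phi(\mathcal A_\tau^c)+\delta_\Phi(\tau),$$ where $\mathcal A_\tau=\{(w,u,v): i_\Phi(w,u;v)-i_\Phi(w)\le\tau\}$ and $$\delta_\Phi(\tau)=\tfrac12\,\mathbf E_{\Phi_V}\sqrt{\mathbf E_{\Phi_{W,U|V}}\,2^{\,i_\Phi(W,U;V)-i_\Phi(W)}\mathbf 1_{\mathcal A_\tau}(W,U,V)}\ \le\ \tfrac12 2^{\tau/2}.$$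
   Context: The expectation on the left is over the random codebook. Information density: $i_\Phi(a;b)=\log\frac{\Phi_{A,B}(a,b)}{\Phi_A(a)\Phi_B(b)}$; here $i_\Phi(w,u;v)=\log\frac{\Phi_{V|W,U}(v|w,u)}{\Phi_V(v)}$. Self-information $i_\Phi(w)=\log\frac{1}{\Phi_W(w)}$. Logarithms base 2. Total variation is half the $\ell_1$ distance. *)

theory Defs
  imports "HOL-Probability.Probability"
begin

definition joint_pmf :: "'w pmf \<Rightarrow> ('w \<Rightarrow> 'u pmf) \<Rightarrow> ('w \<Rightarrow> 'u \<Rightarrow> 'v pmf) \<Rightarrow> ('w \<times> 'u \<times> 'v) pmf" where
  "joint_pmf PW PU PV =
     bind_pmf PW (\<lambda>w. bind_pmf (PU w) (\<lambda>u. map_pmf (\<lambda>v. (w, u, v)) (PV w u)))"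

definition marg_V :: "'w pmf \<Rightarrow> ('w \<Rightarrow> 'u pmf) \<Rightarrow> ('w \<Rightarrow> 'u \<Rightarrow> 'v pmf) \<Rightarrow> 'v pmf" where
  "marg_V PW PU PV = map_pmf (\<lambda>(w, u, v). v) (joint_pmf PW PU PV)"

definition idens :: "'w pmf \<Rightarrow> ('w \<Rightarrow> 'u pmf) \<Rightarrow> ('w \<Rightarrow> 'u \<Rightarrow> 'v pmf) \<Rightarrow> 'w \<Rightarrow> 'u \<Rightarrow> 'v \<Rightarrow> real" where
  "idens PW PU PV w u v = log 2 (pmf (PV w u) v / pmf (marg_V PW PU PV) v)"

definition selfinfo :: "'w pmf \<Rightarrow> 'w \<Rightarrow> real" where
  "selfinfo PW w = log 2 (1 / pmf PW w)"

definition A_set :: "'w pmf \<Rightarrow> ('w \<Rightarrow> 'u pmf) \<Rightarrow> ('w \<Rightarrow> 'u \<Rightarrow> 'v pmf) \<Rightarrow> real \<Rightarrow> ('w \<times> 'u \<times> 'v) set" where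
  "A_set PW PU PV \<tau> = {(w, u, v). idens PW PU PV w u v - selfinfo PW w \<le> \<tau>}"

text \<open>delta_Phi(tau); the conditional Phi_{W,U|V=v} is cond_pmf of the joint on {V = v}.\<close>
definition delta :: "'w pmf \<Rightarrow> ('w \<Rightarrow> 'u pmf) \<Rightarrow> ('w \<Rightarrow> 'u \<Rightarrow> 'v pmf) \<Rightarrow> real \<Rightarrow> real" where
  "delta PW PU PV \<tau> = 1 / 2 * measure_pmf.expectation (marg_V PW PU PV)
     (\<lambda>v. sqrt (measure_pmf.expectation (cond_pmf (joint_pmf PW PU PV) {x. snd (snd x) = v})
        (\<lambda>(w, u, v'). 2 powr (idens PW PU PV w u v' - selfinfo PW w)
                       * indicator (A_set PW PU PV \<tau>) (w, u, v'))))"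

definition induced_PV :: "'w pmf \<Rightarrow> ('w \<Rightarrow> 'u \<Rightarrow> 'v pmf) \<Rightarrow> ('w \<Rightarrow> 'u) \<Rightarrow> 'v \<Rightarrow> real" where
  "induced_PV PW PV c v = measure_pmf.expectation PW (\<lambda>w. pmf (PV w (c w)) v)"

definition tv_dist :: "('v \<Rightarrow> real) \<Rightarrow> ('v \<Rightarrow> real) \<Rightarrow> real" where
  "tv_dist P Q = (\<Sum>\<^sub>\<infinity>v. \<bar>P v - Q v\<bar>) / 2"

definition codebook :: "('w \<Rightarrow> 'u pmf) \<Rightarrow> ('w \<Rightarrow> 'u) measure" where
  "codebook PU = PiM UNIV (\<lambda>w. measure_pmf (PU w))"

end

theory Submission
  imports Defs
begin

lemma pps: "product_prob_space (\<lambda>w. measure_pmf (PU w))"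
  unfolding product_prob_space_def product_prob_space_axioms_def product_sigma_finite_def
  by (auto simp: prob_space_measure_pmf prob_space_imp_sigma_finite)

lemma prob_codebook: "prob_space (codebook PU)"
  unfolding codebook_def by (intro prob_space_PiM) (simp add: prob_space_measure_pmf)

lemma space_codebook: "space (codebook PU) = UNIV"
  unfolding codebook_def by (simp add: space_PiM)

lemma comp_meas: "(\<lambda>c. c w) \<in> measurable (codebook PU) (count_space UNIV)"
proof -
  have "(\<lambda>c. c w) \<in> measurable (codebook PU) (measure_pmf (PU w))"
    unfolding codebook_def by (rule measurable_component_singleton) simp
  then show ?thesis by simp
qed

lemma comp_integral:
  "(\<integral>\<^sup>+ c. g (c w) \<partial>codebook PU) = (\<integral>\<^sup>+ u. g u \<partial>PU w)"
proof -
  have "distr (codebook PU) (measure_pmf (PU w)) (\<lambda>c. c w) = measure_pmf (PU w)"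
    unfolding codebook_def by (rule distr_PiM_component) (auto simp: prob_space_measure_pmf)
  then have "(\<integral>\<^sup>+ u. g u \<partial>PU w) = (\<integral>\<^sup>+ u. g u \<partial>distr (codebook PU) (measure_pmf (PU w)) (\<lambda>c. c w))"
    by simp
  also have "\<dots> = (\<integral>\<^sup>+ c. g (c w) \<partial>codebook PU)"
    by (rule nn_integral_distr) (auto simp: comp_meas)
  finally show ?thesis ..
qed

lemma pair_integral:
  assumes "w \<noteq> w'"
  shows "(\<integral>\<^sup>+ c. g (c w) * h (c w') \<partial>codebook PU) = (\<integral>\<^sup>+ u. g u \<partial>PU w) * (\<integral>\<^sup>+ u. h u \<partial>PU w')"
proof -
  interpret P: product_prob_space "\<lambda>w. measure_pmf (PU w)" UNIV by (rule pps)
  let ?J = "{w, w'}"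
  define F where "F i = (if i = w then g else h)" for i
  have d: "distr (codebook PU) (PiM ?J (\<lambda>w. measure_pmf (PU w))) (\<lambda>x. restrict x ?J) = PiM ?J (\<lambda>w. measure_pmf (PU w))"
    unfolding codebook_def by (rule P.distr_PiM_restrict_finite) auto
  have "(\<integral>\<^sup>+ x. (\<Prod>i\<in>?J. F i (x i)) \<partial>PiM ?J (\<lambda>w. measure_pmf (PU w))) = (\<Prod>i\<in>?J. integral\<^sup>N (PU i) (F i))"
    by (rule P.product_nn_integral_prod) auto
  also have "\<dots> = (\<integral>\<^sup>+ u. g u \<partial>PU w) * (\<integral>\<^sup>+ u. h u \<partial>PU w')"
    using assms by (simp add: F_def)
  finally have 1: "(\<integral>\<^sup>+ x. (\<Prod>i\<in>?J. F i (x i)) \<partial>PiM ?J (\<lambda>w. measure_pmf (PU w))) = (\<integral>\<^sup>+ u. g u \<partial>PU w) * (\<integral>\<^sup>+ u. h u \<partial>PU w')" .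
  have m1: "(\<lambda>x. restrict x ?J) \<in> codebook PU \<rightarrow>\<^sub>M Pi\<^sub>M ?J (\<lambda>w. measure_pmf (PU w))"
    by (auto simp: codebook_def measurable_restrict_subset)
  have m2: "(\<lambda>x. \<Prod>i\<in>?J. F i (x i)) \<in> borel_measurable (Pi\<^sub>M ?J (\<lambda>w. measure_pmf (PU w)))"
  proof (intro borel_measurable_prod_ennreal)
    fix i assume "i \<in> ?J"
    have "(\<lambda>x. x i) \<in> Pi\<^sub>M ?J (\<lambda>w. measure_pmf (PU w)) \<rightarrow>\<^sub>M measure_pmf (PU i)"
      using \<open>i \<in> ?J\<close> by (rule measurable_component_singleton)
    moreover have "F i \<in> borel_measurable (measure_pmf (PU i))" by simp
    ultimately show "(\<lambda>x. F i (x i)) \<in> borel_measurable (Pi\<^sub>M ?J (\<lambda>w. measure_pmf (PU w)))"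
      by (rule measurable_compose)
  qed
  have "(\<integral>\<^sup>+ x. (\<Prod>i\<in>?J. F i (x i)) \<partial>PiM ?J (\<lambda>w. measure_pmf (PU w)))
      = (\<integral>\<^sup>+ c. (\<Prod>i\<in>?J. F i (restrict c ?J i)) \<partial>codebook PU)"
  proof -
    have m2': "(\<lambda>x. \<Prod>i\<in>?J. F i (x i)) \<in> borel_measurable (distr (codebook PU) (PiM ?J (\<lambda>w. measure_pmf (PU w))) (\<lambda>x. restrict x ?J))"
      unfolding d by (rule m2)
    show ?thesis using nn_integral_distr[OF m1 m2'] d by simp
  qed
  also have "\<dots> = (\<integral>\<^sup>+ c. g (c w) * h (c w') \<partial>codebook PU)"
    using assms by (simp add: F_def)
  finally show ?thesis using 1 by simp
qed


lemma int_bnd: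
  fixes f :: "'a \<Rightarrow> real"
  assumes "\<And>x. x \<in> space M \<Longrightarrow> \<bar>f x\<bar> \<le> B" "f \<in> borel_measurable M" "prob_space M"
  shows "integrable M f"
proof -
  interpret prob_space M by fact
  show ?thesis by (rule integrable_const_bound[where B=B]) (use assms in auto)
qed

lemma enn_exp:
  fixes f :: "'a \<Rightarrow> real"
  assumes "\<And>x. x \<in> space M \<Longrightarrow> 0 \<le> f x" "\<And>x. x \<in> space M \<Longrightarrow> f x \<le> B" "f \<in> borel_measurable M" "prob_space M"
  shows "ennreal (integral\<^sup>L M f) = (\<integral>\<^sup>+ x. ennreal (f x) \<partial>M)"
proof -
  have "integrable M f" by (rule int_bnd[where B=B]) (use assms in auto)
  then show ?thesis using assms by (subst nn_integral_eq_integral) auto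
qed

lemma enn_exp_pmf:
  fixes f :: "'a \<Rightarrow> real"
  assumes "\<And>x. 0 \<le> f x" "\<And>x. f x \<le> B"
  shows "ennreal (measure_pmf.expectation p f) = (\<integral>\<^sup>+ x. ennreal (f x) \<partial>p)"
  by (rule enn_exp[where B=B]) (use assms in \<open>auto simp: prob_space_measure_pmf\<close>)

lemma swap_pmf:
  fixes p :: "'i::countable pmf" and f :: "'i \<Rightarrow> 'a \<Rightarrow> ennreal"
  assumes "\<And>i. f i \<in> borel_measurable M"
  shows "(\<integral>\<^sup>+x. \<integral>\<^sup>+i. f i x \<partial>p \<partial>M) = (\<integral>\<^sup>+i. \<integral>\<^sup>+x. f i x \<partial>M \<partial>p)"
proof -
  have "(\<integral>\<^sup>+x. \<integral>\<^sup>+i. f i x \<partial>p \<partial>M) = (\<integral>\<^sup>+x. \<integral>\<^sup>+i. ennreal (pmf p i) * f i x \<partial>count_space UNIV \<partial>M)"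
    by (simp add: nn_integral_measure_pmf)
  also have "\<dots> = (\<integral>\<^sup>+i. \<integral>\<^sup>+x. ennreal (pmf p i) * f i x \<partial>M \<partial>count_space UNIV)"
    by (rule nn_integral_count_space_nn_integral) (use assms in auto)
  also have "\<dots> = (\<integral>\<^sup>+i. ennreal (pmf p i) * \<integral>\<^sup>+x. f i x \<partial>M \<partial>count_space UNIV)"
    by (simp add: nn_integral_cmult assms)
  also have "\<dots> = (\<integral>\<^sup>+i. \<integral>\<^sup>+x. f i x \<partial>M \<partial>p)"
    by (simp add: nn_integral_measure_pmf)
  finally show ?thesis .
qed

lemma infsum_le_nn:
  fixes g :: "'a \<Rightarrow> real"
  assumes "\<And>x. 0 \<le> g x"
  shows "ennreal (infsum g UNIV) \<le> (\<integral>\<^sup>+ x. ennreal (g x) \<partial>count_space UNIV)"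
proof (cases "g summable_on UNIV")
  case True
  then have "(\<lambda>x. norm (g x)) summable_on UNIV" using assms by simp
  then have abs: "Infinite_Set_Sum.abs_summable_on g UNIV" using abs_summable_equivalent by blast
  then have "infsetsum g UNIV = infsum g UNIV" by (rule infsetsum_infsum)
  moreover have "(\<integral>\<^sup>+ x. ennreal (g x) \<partial>count_space UNIV) = ennreal (infsetsum g UNIV)"
    using nn_integral_conv_infsetsum[OF abs] assms by simp
  ultimately show ?thesis by simp
next
  case False
  then show ?thesis by (simp add: infsum_not_exists)
qed

lemma marg_enn:
  "ennreal (pmf (marg_V PW PU PV) v) = (\<integral>\<^sup>+w. \<integral>\<^sup>+u. ennreal (pmf (PV w u) v) \<partial>PU w \<partial>PW)"
proof -
  have "marg_V PW PU PV = bind_pmf PW (\<lambda>w. bind_pmf (PU w) (\<lambda>u. PV w u))"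
    unfolding marg_V_def joint_pmf_def
    by (simp add: map_bind_pmf map_pmf_comp)
  then show ?thesis by (simp add: ennreal_pmf_bind)
qed

lemma joint_nn:
  "(\<integral>\<^sup>+x. f x \<partial>joint_pmf PW PU PV) = (\<integral>\<^sup>+w. \<integral>\<^sup>+u. \<integral>\<^sup>+v. f (w,u,v) \<partial>PV w u \<partial>PU w \<partial>PW)"
  unfolding joint_pmf_def by simp


lemma comp_meas_gen: "(\<lambda>c. (f (c w) :: 'b::topological_space)) \<in> borel_measurable (codebook PU)"
  by (rule measurable_compose[OF comp_meas]) simp

lemma comp2_meas:
  fixes PU :: "'w \<Rightarrow> 'u::countable pmf" and f :: "'u \<Rightarrow> 'u \<Rightarrow> 'b::topological_space"
  shows "(\<lambda>c. f (c w) (c w')) \<in> borel_measurable (codebook PU)"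
  by (rule measurable_compose_countable[where f="\<lambda>i c. f i (c w')" and g="\<lambda>c. c w", OF comp_meas_gen comp_meas])

lemma joint_meas:
  fixes h :: "'w::countable \<Rightarrow> ('w \<Rightarrow> 'u::countable) \<Rightarrow> 'b::topological_space"
  assumes "\<And>i. h i \<in> borel_measurable (codebook PU)"
  shows "(\<lambda>(c, w). h w c) \<in> borel_measurable (codebook PU \<Otimes>\<^sub>M measure_pmf PW)"
proof -
  have "(\<lambda>x. h (snd x) (fst x)) \<in> borel_measurable (codebook PU \<Otimes>\<^sub>M measure_pmf PW)"
  proof (rule measurable_compose_countable[where f="\<lambda>i x. h i (fst x)" and g=snd])
    fix i show "(\<lambda>x. h i (fst x)) \<in> borel_measurable (codebook PU \<Otimes>\<^sub>M measure_pmf PW)"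
      by (rule measurable_compose[OF measurable_fst assms])
  next
    have "snd \<in> codebook PU \<Otimes>\<^sub>M measure_pmf PW \<rightarrow>\<^sub>M measure_pmf PW" by (rule measurable_snd)
    then show "snd \<in> codebook PU \<Otimes>\<^sub>M measure_pmf PW \<rightarrow>\<^sub>M count_space UNIV" by simp
  qed
  then show ?thesis by (simp add: case_prod_beta')
qed

lemma exp01:
  fixes f :: "'a \<Rightarrow> real"
  assumes "\<And>x. 0 \<le> f x" "\<And>x. f x \<le> 1"
  shows "0 \<le> measure_pmf.expectation p f \<and> measure_pmf.expectation p f \<le> 1"
proof -
  have e: "ennreal (measure_pmf.expectation p f) = (\<integral>\<^sup>+ x. ennreal (f x) \<partial>p)"
    by (rule enn_exp_pmf[where B=1]) (use assms in auto)
  have "(\<integral>\<^sup>+ x. ennreal (f x) \<partial>p) \<le> (\<integral>\<^sup>+ x. 1 \<partial>p)"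
    by (rule nn_integral_mono) (use assms in auto)
  also have "\<dots> = 1" by (simp add: measure_pmf.emeasure_space_1)
  finally have "measure_pmf.expectation p f \<le> 1" using e
    by (metis ennreal_le_1)
  moreover have "0 \<le> measure_pmf.expectation p f" by (rule integral_nonneg_AE) (use assms in auto)
  ultimately show ?thesis by simp
qed

definition Xf :: "'w pmf \<Rightarrow> ('w \<Rightarrow> 'u \<Rightarrow> real) \<Rightarrow> ('w \<Rightarrow> 'u) \<Rightarrow> real" where
  "Xf PW a c = measure_pmf.expectation PW (\<lambda>w. a w (c w))"

lemma Xf_meas: "Xf PW a \<in> borel_measurable (codebook (PU :: 'w::countable \<Rightarrow> 'u::countable pmf))"
proof -
  have "(\<lambda>(c, w). a w (c w)) \<in> borel_measurable (codebook PU \<Otimes>\<^sub>M measure_pmf PW)"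
    by (rule joint_meas[where h="\<lambda>w c. a w (c w)"]) (rule comp_meas_gen)
  then show ?thesis unfolding Xf_def[abs_def]
    by (rule sigma_finite_measure.borel_measurable_lebesgue_integral[OF prob_space_imp_sigma_finite[OF prob_space_measure_pmf]])
qed


lemma Xf_enn:
  assumes "\<And>w u. 0 \<le> a w u" "\<And>w u. a w u \<le> 1"
  shows "ennreal (Xf PW a c) = (\<integral>\<^sup>+w. ennreal (a w (c w)) \<partial>PW)"
  unfolding Xf_def by (rule enn_exp_pmf[where B=1]) (use assms in auto)

lemma Xf_01:
  assumes "\<And>w u. 0 \<le> a w u" "\<And>w u. a w u \<le> 1"
  shows "0 \<le> Xf PW a c \<and> Xf PW a c \<le> 1"
  unfolding Xf_def by (rule exp01) (use assms in auto)

lemma Xf_mean: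
  fixes PW :: "'w::countable pmf" and PU :: "'w \<Rightarrow> 'u::countable pmf"
  assumes "\<And>w u. 0 \<le> a w u" "\<And>w u. a w u \<le> 1"
  shows "(\<integral>\<^sup>+c. ennreal (Xf PW a c) \<partial>codebook PU)
     = ennreal (measure_pmf.expectation PW (\<lambda>w. measure_pmf.expectation (PU w) (a w)))"
proof -
  have "(\<integral>\<^sup>+c. ennreal (Xf PW a c) \<partial>codebook PU) = (\<integral>\<^sup>+c. \<integral>\<^sup>+w. ennreal (a w (c w)) \<partial>PW \<partial>codebook PU)"
    by (simp add: Xf_enn[OF assms])
  also have "\<dots> = (\<integral>\<^sup>+w. \<integral>\<^sup>+c. ennreal (a w (c w)) \<partial>codebook PU \<partial>PW)"
    by (rule swap_pmf) (rule comp_meas_gen)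
  also have "\<dots> = (\<integral>\<^sup>+w. \<integral>\<^sup>+u. ennreal (a w u) \<partial>PU w \<partial>PW)"
  proof (rule nn_integral_cong)
    fix w show "(\<integral>\<^sup>+c. ennreal (a w (c w)) \<partial>codebook PU) = (\<integral>\<^sup>+u. ennreal (a w u) \<partial>PU w)"
      by (rule comp_integral)
  qed
  also have "\<dots> = (\<integral>\<^sup>+w. ennreal (measure_pmf.expectation (PU w) (a w)) \<partial>PW)"
    by (subst enn_exp_pmf[where B=1]) (use assms in auto)
  also have "\<dots> = ennreal (measure_pmf.expectation PW (\<lambda>w. measure_pmf.expectation (PU w) (a w)))"
  proof (rule enn_exp_pmf[where B=1, symmetric])
    fix w have "0 \<le> measure_pmf.expectation (PU w) (a w) \<and> measure_pmf.expectation (PU w) (a w) \<le> 1"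
      by (rule exp01) (use assms in auto)
    then show "0 \<le> measure_pmf.expectation (PU w) (a w)" "measure_pmf.expectation (PU w) (a w) \<le> 1" by auto
  qed
  finally show ?thesis .
qed

lemma prod_nn:
  "(\<integral>\<^sup>+x. f x \<partial>measure_pmf p) * (\<integral>\<^sup>+x. g x \<partial>measure_pmf p) = (\<integral>\<^sup>+x. \<integral>\<^sup>+y. f x * g y \<partial>p \<partial>p)"
proof -
  have "(\<integral>\<^sup>+x. f x \<partial>measure_pmf p) * (\<integral>\<^sup>+x. g x \<partial>measure_pmf p) = (\<integral>\<^sup>+x. f x * (\<integral>\<^sup>+y. g y \<partial>p) \<partial>p)"
    by (simp add: nn_integral_multc)
  also have "\<dots> = (\<integral>\<^sup>+x. \<integral>\<^sup>+y. f x * g y \<partial>p \<partial>p)"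
    by (simp add: nn_integral_cmult)
  finally show ?thesis .
qed

lemma Xf_sq:
  fixes PW :: "'w::countable pmf" and PU :: "'w \<Rightarrow> 'u::countable pmf"
  assumes "\<And>w u. 0 \<le> a w u" "\<And>w u. a w u \<le> 1"
  shows "(\<integral>\<^sup>+c. ennreal ((Xf PW a c)\<^sup>2) \<partial>codebook PU)
     \<le> ennreal ((measure_pmf.expectation PW (\<lambda>w. measure_pmf.expectation (PU w) (a w)))\<^sup>2
        + measure_pmf.expectation PW (\<lambda>w. pmf PW w * measure_pmf.expectation (PU w) (\<lambda>u. (a w u)\<^sup>2)))"
proof -
  let ?q = "measure_pmf.expectation PW (\<lambda>w. measure_pmf.expectation (PU w) (a w))"
  let ?S = "measure_pmf.expectation PW (\<lambda>w. pmf PW w * measure_pmf.expectation (PU w) (\<lambda>u. (a w u)\<^sup>2))"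
  define E where "E w = (\<integral>\<^sup>+u. ennreal (a w u) \<partial>PU w)" for w
  define E2 where "E2 w = (\<integral>\<^sup>+u. ennreal ((a w u)\<^sup>2) \<partial>PU w)" for w
  have a2: "0 \<le> (a w u)\<^sup>2" "(a w u)\<^sup>2 \<le> 1" for w u
    using assms[of w u] by (auto simp: power_le_one)
  have "(\<integral>\<^sup>+c. ennreal ((Xf PW a c)\<^sup>2) \<partial>codebook PU)
      = (\<integral>\<^sup>+c. \<integral>\<^sup>+w. \<integral>\<^sup>+w'. ennreal (a w (c w)) * ennreal (a w' (c w')) \<partial>PW \<partial>PW \<partial>codebook PU)"
  proof (rule nn_integral_cong)
    fix c
    have "ennreal ((Xf PW a c)\<^sup>2) = ennreal (Xf PW a c) * ennreal (Xf PW a c)"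
      using Xf_01[of a, OF assms] by (simp add: power2_eq_square ennreal_mult)
    then show "ennreal ((Xf PW a c)\<^sup>2) = (\<integral>\<^sup>+w. \<integral>\<^sup>+w'. ennreal (a w (c w)) * ennreal (a w' (c w')) \<partial>PW \<partial>PW)"
      by (simp add: Xf_enn[OF assms] prod_nn)
  qed
  also have "\<dots> = (\<integral>\<^sup>+w. \<integral>\<^sup>+c. \<integral>\<^sup>+w'. ennreal (a w (c w)) * ennreal (a w' (c w')) \<partial>PW \<partial>codebook PU \<partial>PW)"
  proof (rule swap_pmf)
    fix w
    have "(\<lambda>(c, w'). ennreal (a w (c w)) * ennreal (a w' (c w'))) \<in> borel_measurable (codebook PU \<Otimes>\<^sub>M measure_pmf PW)"
      by (rule joint_meas[where h="\<lambda>w' c. ennreal (a w (c w)) * ennreal (a w' (c w'))"]) (rule comp2_meas)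
    then show "(\<lambda>c. \<integral>\<^sup>+w'. ennreal (a w (c w)) * ennreal (a w' (c w')) \<partial>PW) \<in> borel_measurable (codebook PU)"
      by (rule sigma_finite_measure.borel_measurable_nn_integral[OF prob_space_imp_sigma_finite[OF prob_space_measure_pmf]])
  qed
  also have "\<dots> = (\<integral>\<^sup>+w. \<integral>\<^sup>+w'. \<integral>\<^sup>+c. ennreal (a w (c w)) * ennreal (a w' (c w')) \<partial>codebook PU \<partial>PW \<partial>PW)"
    by (intro nn_integral_cong swap_pmf comp2_meas)
  also have "\<dots> \<le> (\<integral>\<^sup>+w. \<integral>\<^sup>+w'. E w * E w' + E2 w * indicator {w} w' \<partial>PW \<partial>PW)"
  proof (intro nn_integral_mono)
    fix w w'
    show "(\<integral>\<^sup>+c. ennreal (a w (c w)) * ennreal (a w' (c w')) \<partial>codebook PU) \<le> E w * E w' + E2 w * indicator {w} w'"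
    proof (cases "w = w'")
      case True
      have "(\<integral>\<^sup>+c. ennreal (a w (c w)) * ennreal (a w' (c w')) \<partial>codebook PU) = E2 w"
      proof -
        have "(\<integral>\<^sup>+c. ennreal (a w (c w)) * ennreal (a w' (c w')) \<partial>codebook PU)
            = (\<integral>\<^sup>+c. (\<lambda>u. ennreal ((a w u)\<^sup>2)) (c w) \<partial>codebook PU)"
          using True assms by (intro nn_integral_cong) (simp add: power2_eq_square ennreal_mult)
        also have "\<dots> = E2 w" unfolding E2_def by (rule comp_integral)
        finally show ?thesis .
      qed
      then show ?thesis using True by (simp add: add_increasing)
    next
      case False
      have "(\<integral>\<^sup>+c. ennreal (a w (c w)) * ennreal (a w' (c w')) \<partial>codebook PU) = E w * E w'"
        unfolding E_def using pair_integral[OF False, where g="\<lambda>u. ennreal (a w u)" and h="\<lambda>u. ennreal (a w' u)" and PU=PU] by simp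
      then show ?thesis using False by simp
    qed
  qed
  also have "\<dots> = (\<integral>\<^sup>+w. \<integral>\<^sup>+w'. E w * E w' \<partial>PW \<partial>PW) + (\<integral>\<^sup>+w. \<integral>\<^sup>+w'. E2 w * indicator {w} w' \<partial>PW \<partial>PW)"
    by (simp add: nn_integral_add)
  also have "(\<integral>\<^sup>+w. \<integral>\<^sup>+w'. E w * E w' \<partial>PW \<partial>PW) = (\<integral>\<^sup>+w. E w \<partial>PW) * (\<integral>\<^sup>+w. E w \<partial>PW)"
    by (simp add: prod_nn)
  also have "(\<integral>\<^sup>+w. E w \<partial>PW) = ennreal ?q"
  proof -
    have "(\<integral>\<^sup>+w. E w \<partial>PW) = (\<integral>\<^sup>+w. ennreal (measure_pmf.expectation (PU w) (a w)) \<partial>PW)"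
      unfolding E_def by (subst enn_exp_pmf[where B=1]) (use assms in auto)
    also have "\<dots> = ennreal ?q"
    proof (rule enn_exp_pmf[where B=1, symmetric])
    fix w have "0 \<le> measure_pmf.expectation (PU w) (a w) \<and> measure_pmf.expectation (PU w) (a w) \<le> 1"
      by (rule exp01) (use assms in auto)
    then show "0 \<le> measure_pmf.expectation (PU w) (a w)" "measure_pmf.expectation (PU w) (a w) \<le> 1" by auto
  qed
    finally show ?thesis .
  qed
  also have "(\<integral>\<^sup>+w. \<integral>\<^sup>+w'. E2 w * indicator {w} w' \<partial>PW \<partial>PW) = (\<integral>\<^sup>+w. E2 w * ennreal (pmf PW w) \<partial>PW)"
    by (simp add: emeasure_pmf_single)
  also have "\<dots> = ennreal ?S"
  proof -
    have "(\<integral>\<^sup>+w. E2 w * ennreal (pmf PW w) \<partial>PW) = (\<integral>\<^sup>+w. ennreal (pmf PW w * measure_pmf.expectation (PU w) (\<lambda>u. (a w u)\<^sup>2)) \<partial>PW)"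
    proof (rule nn_integral_cong)
      fix w
      have "E2 w = ennreal (measure_pmf.expectation (PU w) (\<lambda>u. (a w u)\<^sup>2))"
        unfolding E2_def by (rule enn_exp_pmf[where B=1, symmetric]) (use a2 in auto)
      moreover have "0 \<le> measure_pmf.expectation (PU w) (\<lambda>u. (a w u)\<^sup>2)" using exp01[of "\<lambda>u. (a w u)\<^sup>2"] a2 by auto
      ultimately show "E2 w * ennreal (pmf PW w) = ennreal (pmf PW w * measure_pmf.expectation (PU w) (\<lambda>u. (a w u)\<^sup>2))"
        by (simp add: ennreal_mult mult.commute)
    qed
    also have "\<dots> = ennreal ?S"
    proof (rule enn_exp_pmf[where B=1, symmetric])
      fix w
      have "0 \<le> measure_pmf.expectation (PU w) (\<lambda>u. (a w u)\<^sup>2) \<and> measure_pmf.expectation (PU w) (\<lambda>u. (a w u)\<^sup>2) \<le> 1"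
        by (rule exp01) (use a2 in auto)
      then show "0 \<le> pmf PW w * measure_pmf.expectation (PU w) (\<lambda>u. (a w u)\<^sup>2)"
        "pmf PW w * measure_pmf.expectation (PU w) (\<lambda>u. (a w u)\<^sup>2) \<le> 1"
        by (auto intro: mult_le_one pmf_le_1)
    qed
    finally show ?thesis .
  qed
  finally show ?thesis
    using exp01[of "\<lambda>w. measure_pmf.expectation (PU w) (a w)" PW] exp01 assms
    by (simp add: ennreal_mult[symmetric] power2_eq_square ennreal_plus[symmetric] del: ennreal_plus)
qed


lemma Xf_dev:
  fixes PW :: "'w::countable pmf" and PU :: "'w \<Rightarrow> 'u::countable pmf"
  assumes a: "\<And>w u. 0 \<le> a w u" "\<And>w u. a w u \<le> 1"
  shows "(\<integral>\<^sup>+c. ennreal \<bar>Xf PW a c - measure_pmf.expectation PW (\<lambda>w. measure_pmf.expectation (PU w) (a w))\<bar> \<partial>codebook PU)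
     \<le> ennreal (sqrt (measure_pmf.expectation PW (\<lambda>w. pmf PW w * measure_pmf.expectation (PU w) (\<lambda>u. (a w u)\<^sup>2))))"
proof -
  let ?M = "codebook PU"
  let ?q = "measure_pmf.expectation PW (\<lambda>w. measure_pmf.expectation (PU w) (a w))"
  let ?S = "measure_pmf.expectation PW (\<lambda>w. pmf PW w * measure_pmf.expectation (PU w) (\<lambda>u. (a w u)\<^sup>2))"
  define X where "X = Xf PW a"
  interpret M: prob_space ?M by (rule prob_codebook)
  have Xm[measurable]: "X \<in> borel_measurable ?M" unfolding X_def by (rule Xf_meas)
  have X01: "0 \<le> X c" "X c \<le> 1" for c using Xf_01[of a, OF a] unfolding X_def by auto
  have q01: "0 \<le> ?q" "?q \<le> 1"
  proof -
    have "0 \<le> ?q \<and> ?q \<le> 1"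
    proof (rule exp01)
      fix w have "0 \<le> measure_pmf.expectation (PU w) (a w) \<and> measure_pmf.expectation (PU w) (a w) \<le> 1"
        by (rule exp01) (use a in auto)
      then show "0 \<le> measure_pmf.expectation (PU w) (a w)" "measure_pmf.expectation (PU w) (a w) \<le> 1" by auto
    qed
    then show "0 \<le> ?q" "?q \<le> 1" by auto
  qed
  have S0: "0 \<le> ?S"
    by (rule integral_nonneg_AE) (auto intro!: mult_nonneg_nonneg integral_nonneg_AE simp: a)
  have iX: "integrable ?M X" by (rule int_bnd[where B=1]) (use X01 in \<open>auto simp: M.prob_space_axioms\<close>)
  have iX2: "integrable ?M (\<lambda>c. (X c)\<^sup>2)"
    by (rule int_bnd[where B=1]) (use X01 in \<open>auto simp: M.prob_space_axioms power_le_one\<close>)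
  have EX: "integral\<^sup>L ?M X = ?q"
  proof -
    have "ennreal (integral\<^sup>L ?M X) = (\<integral>\<^sup>+c. ennreal (X c) \<partial>?M)"
      by (rule enn_exp[where B=1]) (use X01 in \<open>auto simp: M.prob_space_axioms\<close>)
    also have "\<dots> = ennreal ?q" unfolding X_def by (rule Xf_mean[OF a])
    finally show ?thesis using q01 by (subst (asm) ennreal_inj) (auto intro!: integral_nonneg_AE X01)
  qed
  have EX2: "integral\<^sup>L ?M (\<lambda>c. (X c)\<^sup>2) \<le> ?q\<^sup>2 + ?S"
  proof -
    have "ennreal (integral\<^sup>L ?M (\<lambda>c. (X c)\<^sup>2)) = (\<integral>\<^sup>+c. ennreal ((X c)\<^sup>2) \<partial>?M)"
      by (rule enn_exp[where B=1]) (use X01 in \<open>auto simp: M.prob_space_axioms power_le_one\<close>)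
    also have "\<dots> \<le> ennreal (?q\<^sup>2 + ?S)" unfolding X_def by (rule Xf_sq[OF a])
    finally show ?thesis using S0 by (subst (asm) ennreal_le_iff) auto
  qed
  have var: "integral\<^sup>L ?M (\<lambda>c. (X c - ?q)\<^sup>2) \<le> ?S"
  proof -
    have "integral\<^sup>L ?M (\<lambda>c. (X c - ?q)\<^sup>2) = integral\<^sup>L ?M (\<lambda>c. (X c)\<^sup>2 - 2 * ?q * X c + ?q\<^sup>2)"
      by (rule Bochner_Integration.integral_cong) (auto simp: power2_diff algebra_simps)
    also have "\<dots> = integral\<^sup>L ?M (\<lambda>c. (X c)\<^sup>2) - 2 * ?q * integral\<^sup>L ?M X + ?q\<^sup>2"
      using iX iX2 by (simp add: M.prob_space)
    finally show ?thesis using EX EX2 by (simp add: power2_eq_square)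
  qed
  define r where "r = integral\<^sup>L ?M (\<lambda>c. \<bar>X c - ?q\<bar>)"
  have dev01: "0 \<le> \<bar>X c - ?q\<bar>" "\<bar>X c - ?q\<bar> \<le> 1" for c using X01[of c] q01 by auto
  have r_enn: "ennreal r = (\<integral>\<^sup>+c. ennreal \<bar>X c - ?q\<bar> \<partial>?M)"
    unfolding r_def by (rule enn_exp[where B=1]) (use dev01 in \<open>auto simp: M.prob_space_axioms\<close>)
  have r0: "0 \<le> r" unfolding r_def by (rule integral_nonneg_AE) auto
  have "(\<integral>\<^sup>+c. ennreal \<bar>X c - ?q\<bar> * 1 \<partial>?M)\<^sup>2 \<le> (\<integral>\<^sup>+c. (ennreal \<bar>X c - ?q\<bar>)\<^sup>2 \<partial>?M) * (\<integral>\<^sup>+c. 1\<^sup>2 \<partial>?M)"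
    by (rule Cauchy_Schwarz_nn_integral) auto
  also have "(\<integral>\<^sup>+c. 1\<^sup>2 \<partial>?M) = 1" using M.emeasure_space_1 by simp
  also have "(\<integral>\<^sup>+c. (ennreal \<bar>X c - ?q\<bar>)\<^sup>2 \<partial>?M) = (\<integral>\<^sup>+c. ennreal ((X c - ?q)\<^sup>2) \<partial>?M)"
    by (intro nn_integral_cong) (subst ennreal_power, simp_all)
  also have "\<dots> = ennreal (integral\<^sup>L ?M (\<lambda>c. (X c - ?q)\<^sup>2))"
    by (rule enn_exp[where B=1, symmetric]) (use dev01 in \<open>auto simp: M.prob_space_axioms abs_square_le_1\<close>)
  finally have "(ennreal r)\<^sup>2 \<le> ennreal (integral\<^sup>L ?M (\<lambda>c. (X c - ?q)\<^sup>2))"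
    by (simp add: r_enn)
  then have "r\<^sup>2 \<le> integral\<^sup>L ?M (\<lambda>c. (X c - ?q)\<^sup>2)"
    using r0 by (auto simp: ennreal_power ennreal_le_iff2)
  then have "r\<^sup>2 \<le> ?S" using var by linarith
  then have "r \<le> sqrt ?S" using r0 by (simp add: real_le_rsqrt)
  then have "ennreal r \<le> ennreal (sqrt ?S)" by (rule ennreal_leI)
  then show ?thesis using r_enn unfolding X_def by simp
qed


definition ka :: "('w \<times> 'u \<times> 'v) set \<Rightarrow> ('w \<Rightarrow> 'u \<Rightarrow> 'v pmf) \<Rightarrow> 'v \<Rightarrow> 'w \<Rightarrow> 'u \<Rightarrow> real" where
  "ka A PV v w u = pmf (PV w u) v * indicator A (w, u, v)"

lemma ka01: "0 \<le> ka A PV v w u" "ka A PV v w u \<le> 1"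
  unfolding ka_def by (auto simp: indicator_def pmf_le_1)

lemma ka_le: "ka A PV v w u \<le> pmf (PV w u) v"
  unfolding ka_def by (auto simp: indicator_def)

lemma ka_sum: "ka A PV v w u + ka (- A) PV v w u = pmf (PV w u) v"
  unfolding ka_def by (auto simp: indicator_def)

lemma q_enn:
  assumes "\<And>w u. 0 \<le> a w u" "\<And>w u. a w u \<le> 1"
  shows "ennreal (measure_pmf.expectation PW (\<lambda>w. measure_pmf.expectation (PU w) (a w)))
     = (\<integral>\<^sup>+w. \<integral>\<^sup>+u. ennreal (a w u) \<partial>PU w \<partial>PW)"
proof -
  have "ennreal (measure_pmf.expectation PW (\<lambda>w. measure_pmf.expectation (PU w) (a w)))
      = (\<integral>\<^sup>+w. ennreal (measure_pmf.expectation (PU w) (a w)) \<partial>PW)"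
  proof (rule enn_exp_pmf[where B=1])
    fix w have "0 \<le> measure_pmf.expectation (PU w) (a w) \<and> measure_pmf.expectation (PU w) (a w) \<le> 1"
      by (rule exp01) (use assms in auto)
    then show "0 \<le> measure_pmf.expectation (PU w) (a w)" "measure_pmf.expectation (PU w) (a w) \<le> 1" by auto
  qed
  also have "\<dots> = (\<integral>\<^sup>+w. \<integral>\<^sup>+u. ennreal (a w u) \<partial>PU w \<partial>PW)"
    by (intro nn_integral_cong enn_exp_pmf[where B=1]) (use assms in auto)
  finally show ?thesis .
qed

lemma q_nonneg:
  fixes a :: "'w \<Rightarrow> 'u \<Rightarrow> real"
  assumes "\<And>w u. 0 \<le> a w u" "\<And>w u. a w u \<le> 1"
  shows "0 \<le> measure_pmf.expectation PW (\<lambda>w. measure_pmf.expectation (PU w) (a w))"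
proof -
  have "0 \<le> measure_pmf.expectation PW (\<lambda>w. measure_pmf.expectation (PU w) (a w)) \<and> measure_pmf.expectation PW (\<lambda>w. measure_pmf.expectation (PU w) (a w)) \<le> 1"
  proof (rule exp01)
    fix w have "0 \<le> measure_pmf.expectation (PU w) (a w) \<and> measure_pmf.expectation (PU w) (a w) \<le> 1"
      by (rule exp01) (use assms in auto)
    then show "0 \<le> measure_pmf.expectation (PU w) (a w)" "measure_pmf.expectation (PU w) (a w) \<le> 1" by auto
  qed
  then show ?thesis by simp
qed

lemma induced_split:
  "induced_PV PW PV c v = Xf PW (ka A PV v) c + Xf PW (ka (- A) PV v) c"
proof -
  have i: "integrable (measure_pmf PW) (\<lambda>w. ka B PV v w (c w))" for B
    by (rule int_bnd[where B=1]) (auto simp: ka01 abs_le_iff prob_space_measure_pmf intro: order_trans[OF _ ka01(1)] order_trans[OF ka01(1)[THEN le_imp_neg_le], of _ 0] )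
  show ?thesis
    unfolding induced_PV_def Xf_def
    by (subst Bochner_Integration.integral_add[OF i i, symmetric]) (simp add: ka_sum)
qed

lemma marg_split:
  "pmf (marg_V PW PU PV) v = measure_pmf.expectation PW (\<lambda>w. measure_pmf.expectation (PU w) (ka A PV v w))
    + measure_pmf.expectation PW (\<lambda>w. measure_pmf.expectation (PU w) (ka (- A) PV v w))"
proof -
  have "ennreal (pmf (marg_V PW PU PV) v) = (\<integral>\<^sup>+w. \<integral>\<^sup>+u. ennreal (ka A PV v w u) + ennreal (ka (- A) PV v w u) \<partial>PU w \<partial>PW)"
    unfolding marg_enn
  proof (intro nn_integral_cong)
    fix w u show "ennreal (pmf (PV w u) v) = ennreal (ka A PV v w u) + ennreal (ka (- A) PV v w u)"
      using ennreal_plus[OF ka01(1) ka01(1), of A PV v w u "- A" PV v w u] ka_sum[of A PV v w u] by simp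
  qed
  also have "\<dots> = ennreal (measure_pmf.expectation PW (\<lambda>w. measure_pmf.expectation (PU w) (ka A PV v w)))
    + ennreal (measure_pmf.expectation PW (\<lambda>w. measure_pmf.expectation (PU w) (ka (- A) PV v w)))"
    by (simp add: q_enn ka01 nn_integral_add)
  also have "\<dots> = ennreal (measure_pmf.expectation PW (\<lambda>w. measure_pmf.expectation (PU w) (ka A PV v w))
    + measure_pmf.expectation PW (\<lambda>w. measure_pmf.expectation (PU w) (ka (- A) PV v w)))"
    by (rule ennreal_plus[symmetric]) (rule q_nonneg, (simp add: ka01)+)+
  finally show ?thesis
    by (subst (asm) ennreal_inj) (auto intro!: add_nonneg_nonneg q_nonneg simp: ka01)
qed

lemma sum_q:
  fixes PW :: "'w::countable pmf" and PU :: "'w \<Rightarrow> 'u::countable pmf" and PV :: "'w \<Rightarrow> 'u \<Rightarrow> 'v::countable pmf"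
  shows "(\<integral>\<^sup>+v. ennreal (measure_pmf.expectation PW (\<lambda>w. measure_pmf.expectation (PU w) (ka B PV v w))) \<partial>count_space UNIV)
    = emeasure (measure_pmf (joint_pmf PW PU PV)) B"
proof -
  have "(\<integral>\<^sup>+v. ennreal (measure_pmf.expectation PW (\<lambda>w. measure_pmf.expectation (PU w) (ka B PV v w))) \<partial>count_space UNIV)
     = (\<integral>\<^sup>+v. \<integral>\<^sup>+w. \<integral>\<^sup>+u. ennreal (ka B PV v w u) \<partial>PU w \<partial>PW \<partial>count_space UNIV)"
    by (simp add: q_enn ka01)
  also have "\<dots> = (\<integral>\<^sup>+w. \<integral>\<^sup>+v. \<integral>\<^sup>+u. ennreal (ka B PV v w u) \<partial>PU w \<partial>count_space UNIV \<partial>PW)"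
    by (rule nn_integral_count_space_nn_integral[symmetric]) auto
  also have "\<dots> = (\<integral>\<^sup>+w. \<integral>\<^sup>+u. \<integral>\<^sup>+v. ennreal (ka B PV v w u) \<partial>count_space UNIV \<partial>PU w \<partial>PW)"
    by (intro nn_integral_cong nn_integral_count_space_nn_integral[symmetric]) auto
  also have "\<dots> = (\<integral>\<^sup>+w. \<integral>\<^sup>+u. \<integral>\<^sup>+v. indicator B (w, u, v) \<partial>PV w u \<partial>PU w \<partial>PW)"
    by (intro nn_integral_cong) (simp add: nn_integral_measure_pmf ka_def ennreal_mult' ennreal_indicator)
  also have "\<dots> = emeasure (measure_pmf (joint_pmf PW PU PV)) B"
    by (simp add: joint_nn[symmetric])
  finally show ?thesis .
qed


definition gf :: "'w pmf \<Rightarrow> ('w \<Rightarrow> 'u pmf) \<Rightarrow> ('w \<Rightarrow> 'u \<Rightarrow> 'v pmf) \<Rightarrow> real \<Rightarrow> 'w \<times> 'u \<times> 'v \<Rightarrow> real" where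
  "gf PW PU PV \<tau> = (\<lambda>(w, u, v'). 2 powr (idens PW PU PV w u v' - selfinfo PW w) * indicator (A_set PW PU PV \<tau>) (w, u, v'))"

definition Yf :: "'w pmf \<Rightarrow> ('w \<Rightarrow> 'u pmf) \<Rightarrow> ('w \<Rightarrow> 'u \<Rightarrow> 'v pmf) \<Rightarrow> real \<Rightarrow> 'v \<Rightarrow> real" where
  "Yf PW PU PV \<tau> v = measure_pmf.expectation (cond_pmf (joint_pmf PW PU PV) {x. snd (snd x) = v}) (gf PW PU PV \<tau>)"

lemma delta_eq: "delta PW PU PV \<tau> = 1/2 * measure_pmf.expectation (marg_V PW PU PV) (\<lambda>v. sqrt (Yf PW PU PV \<tau> v))"
  unfolding delta_def Yf_def gf_def by simp

lemma expB:
  fixes f :: "'a \<Rightarrow> real"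
  assumes "\<And>x. 0 \<le> f x" "\<And>x. f x \<le> B"
  shows "0 \<le> measure_pmf.expectation p f \<and> measure_pmf.expectation p f \<le> B"
proof -
  have B: "0 \<le> B" using assms(1)[of undefined] assms(2)[of undefined] by linarith
  have e: "ennreal (measure_pmf.expectation p f) = (\<integral>\<^sup>+ x. ennreal (f x) \<partial>p)"
    by (rule enn_exp_pmf[where B=B]) (use assms in auto)
  have "(\<integral>\<^sup>+ x. ennreal (f x) \<partial>p) \<le> (\<integral>\<^sup>+ x. ennreal B \<partial>p)"
    by (rule nn_integral_mono) (use assms in \<open>auto intro: ennreal_leI\<close>)
  also have "\<dots> = ennreal B" by (simp add: measure_pmf.emeasure_space_1)
  finally have "ennreal (measure_pmf.expectation p f) \<le> ennreal B" using e by simp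
  then have "measure_pmf.expectation p f \<le> B" using B by (simp add: ennreal_le_iff)
  moreover have "0 \<le> measure_pmf.expectation p f" by (rule integral_nonneg_AE) (use assms in auto)
  ultimately show ?thesis by simp
qed

lemma gf_bnd: "0 \<le> gf PW PU PV \<tau> x" "gf PW PU PV \<tau> x \<le> 2 powr \<tau>"
proof -
  obtain w u v where x: "x = (w, u, v)" by (cases x) auto
  show "0 \<le> gf PW PU PV \<tau> x" unfolding gf_def x by (simp add: indicator_def)
  show "gf PW PU PV \<tau> x \<le> 2 powr \<tau>"
  proof (cases "x \<in> A_set PW PU PV \<tau>")
    case True
    then have "idens PW PU PV w u v - selfinfo PW w \<le> \<tau>" unfolding A_set_def x by simp
    then have "2 powr (idens PW PU PV w u v - selfinfo PW w) \<le> 2 powr \<tau>" by (rule powr_mono) simp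
    then show ?thesis using True unfolding gf_def x by simp
  next
    case False then show ?thesis unfolding gf_def x by simp
  qed
qed

lemma Yf_bnd: "0 \<le> Yf PW PU PV \<tau> v" "Yf PW PU PV \<tau> v \<le> 2 powr \<tau>"
proof -
  have "0 \<le> Yf PW PU PV \<tau> v \<and> Yf PW PU PV \<tau> v \<le> 2 powr \<tau>"
    unfolding Yf_def by (rule expB) (rule gf_bnd)+
  then show "0 \<le> Yf PW PU PV \<tau> v" "Yf PW PU PV \<tau> v \<le> 2 powr \<tau>" by auto
qed

lemma delta_bnd: "delta PW PU PV \<tau> \<le> 1/2 * 2 powr (\<tau>/2)"
proof -
  have "sqrt (Yf PW PU PV \<tau> v) \<le> 2 powr (\<tau>/2)" for v
    using Yf_bnd[of PW PU PV \<tau> v] by (simp add: powr_half_sqrt_powr)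
  then have "measure_pmf.expectation (marg_V PW PU PV) (\<lambda>v. sqrt (Yf PW PU PV \<tau> v)) \<le> 2 powr (\<tau>/2)"
    using expB[of "\<lambda>v. sqrt (Yf PW PU PV \<tau> v)" "2 powr (\<tau>/2)" "marg_V PW PU PV"] Yf_bnd(1)[of PW PU PV \<tau>] by simp
  then show ?thesis unfolding delta_eq by simp
qed


lemma powr_key:
  assumes "0 < pw" "0 < pv" "0 < Q"
  shows "2 powr (log 2 (pv / Q) - log 2 (1 / pw)) = pv * pw / Q"
  using assms by (simp add: powr_diff)

lemma S_enn:
  fixes a :: "'w \<Rightarrow> 'u \<Rightarrow> real"
  assumes "\<And>w u. 0 \<le> a w u" "\<And>w u. a w u \<le> 1"
  shows "ennreal (measure_pmf.expectation PW (\<lambda>w. pmf PW w * measure_pmf.expectation (PU w) (\<lambda>u. (a w u)\<^sup>2)))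
    = (\<integral>\<^sup>+w. \<integral>\<^sup>+u. ennreal (pmf PW w * (a w u)\<^sup>2) \<partial>PU w \<partial>PW)"
proof -
  have a2: "0 \<le> (a w u)\<^sup>2" "(a w u)\<^sup>2 \<le> 1" for w u
    using assms[of w u] by (auto simp: power_le_one)
  have E2: "0 \<le> measure_pmf.expectation (PU w) (\<lambda>u. (a w u)\<^sup>2) \<and> measure_pmf.expectation (PU w) (\<lambda>u. (a w u)\<^sup>2) \<le> 1" for w
    by (rule exp01) (use a2 in auto)
  have "ennreal (measure_pmf.expectation PW (\<lambda>w. pmf PW w * measure_pmf.expectation (PU w) (\<lambda>u. (a w u)\<^sup>2)))
     = (\<integral>\<^sup>+w. ennreal (pmf PW w * measure_pmf.expectation (PU w) (\<lambda>u. (a w u)\<^sup>2)) \<partial>PW)"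
  proof (rule enn_exp_pmf[where B=1])
    fix w
    show "0 \<le> pmf PW w * measure_pmf.expectation (PU w) (\<lambda>u. (a w u)\<^sup>2)" using E2[of w] by simp
    show "pmf PW w * measure_pmf.expectation (PU w) (\<lambda>u. (a w u)\<^sup>2) \<le> 1"
      using E2[of w] by (auto intro: mult_le_one pmf_le_1)
  qed
  also have "\<dots> = (\<integral>\<^sup>+w. \<integral>\<^sup>+u. ennreal (pmf PW w * (a w u)\<^sup>2) \<partial>PU w \<partial>PW)"
  proof (rule nn_integral_cong)
    fix w
    have "ennreal (pmf PW w * measure_pmf.expectation (PU w) (\<lambda>u. (a w u)\<^sup>2))
        = ennreal (pmf PW w) * ennreal (measure_pmf.expectation (PU w) (\<lambda>u. (a w u)\<^sup>2))"
      using E2[of w] by (simp add: ennreal_mult)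
    also have "\<dots> = ennreal (pmf PW w) * (\<integral>\<^sup>+u. ennreal ((a w u)\<^sup>2) \<partial>PU w)"
      by (subst enn_exp_pmf[where B=1]) (use a2 in auto)
    also have "\<dots> = (\<integral>\<^sup>+u. ennreal (pmf PW w * (a w u)\<^sup>2) \<partial>PU w)"
      by (simp add: nn_integral_cmult[symmetric] ennreal_mult)
    finally show "ennreal (pmf PW w * measure_pmf.expectation (PU w) (\<lambda>u. (a w u)\<^sup>2)) = (\<integral>\<^sup>+u. ennreal (pmf PW w * (a w u)\<^sup>2) \<partial>PU w)" .
  qed
  finally show ?thesis .
qed

lemma SY:
  fixes PW :: "'w::countable pmf" and PU :: "'w \<Rightarrow> 'u::countable pmf" and PV :: "'w \<Rightarrow> 'u \<Rightarrow> 'v::countable pmf"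
  shows "sqrt (measure_pmf.expectation PW (\<lambda>w. pmf PW w * measure_pmf.expectation (PU w) (\<lambda>u. (ka (A_set PW PU PV \<tau>) PV v w u)\<^sup>2)))
    \<le> pmf (marg_V PW PU PV) v * sqrt (Yf PW PU PV \<tau> v)"
proof -
  define A where "A = A_set PW PU PV \<tau>"
  define Q where "Q = pmf (marg_V PW PU PV) v"
  define S where "S = measure_pmf.expectation PW (\<lambda>w. pmf PW w * measure_pmf.expectation (PU w) (\<lambda>u. (ka A PV v w u)\<^sup>2))"
  define J where "J = joint_pmf PW PU PV"
  have Senn: "ennreal S = (\<integral>\<^sup>+w. \<integral>\<^sup>+u. ennreal (pmf PW w * (ka A PV v w u)\<^sup>2) \<partial>PU w \<partial>PW)"
    unfolding S_def by (rule S_enn) (rule ka01)+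
  have S0: "0 \<le> S"
  proof -
    have "0 \<le> pmf PW w * measure_pmf.expectation (PU w) (\<lambda>u. (ka A PV v w u)\<^sup>2)" for w
      using exp01[of "\<lambda>u. (ka A PV v w u)\<^sup>2" "PU w"] ka01[of A PV v w] by (auto simp: power_le_one)
    then show ?thesis unfolding S_def by (intro integral_nonneg_AE) auto
  qed
  have Q0: "0 \<le> Q" unfolding Q_def by simp
  show ?thesis
  proof (cases "Q = 0")
    case True
    have "ennreal S \<le> (\<integral>\<^sup>+w. \<integral>\<^sup>+u. ennreal (pmf (PV w u) v) \<partial>PU w \<partial>PW)"
      unfolding Senn
    proof (intro nn_integral_mono ennreal_leI)
      fix w u
      have "pmf PW w * (ka A PV v w u)\<^sup>2 \<le> (ka A PV v w u)\<^sup>2"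
        using ka01[of A PV v w u] by (simp add: mult_left_le_one_le pmf_le_1)
      also have "\<dots> \<le> ka A PV v w u" using ka01[of A PV v w u] by (simp add: power2_eq_square mult_left_le_one_le)
      also have "\<dots> \<le> pmf (PV w u) v" by (rule ka_le)
      finally show "pmf PW w * (ka A PV v w u)\<^sup>2 \<le> pmf (PV w u) v" .
    qed
    also have "\<dots> = ennreal Q" unfolding Q_def by (rule marg_enn[symmetric])
    finally have "S \<le> 0" using True by (simp add: ennreal_eq_0_iff)
    then show ?thesis using S0 unfolding S_def A_def Q_def[symmetric] True by simp
  next
    case False
    then have Qp: "0 < Q" using Q0 by simp
    define s where "s = {x::'w \<times> 'u \<times> 'v. snd (snd x) = v}"
    have mJ: "measure (measure_pmf J) s = Q"
    proof -
      have "Q = measure (measure_pmf J) ((\<lambda>(w, u, v). v) -` {v})"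
        unfolding Q_def marg_V_def J_def by (simp add: pmf_map)
      also have "(\<lambda>(w, u, v). v) -` {v} = s" unfolding s_def by auto
      finally show ?thesis ..
    qed
    have ne: "set_pmf J \<inter> s \<noteq> {}"
      using mJ Qp measure_pmf_zero_iff[of J s] by auto
    define T where "T = (\<integral>\<^sup>+w. \<integral>\<^sup>+u. ennreal (gf PW PU PV \<tau> (w, u, v)) * ennreal (pmf (PV w u) v) \<partial>PU w \<partial>PW)"
    have Yenn: "ennreal (Yf PW PU PV \<tau> v) = T / ennreal Q"
    proof -
      have "ennreal (Yf PW PU PV \<tau> v) = (\<integral>\<^sup>+x. ennreal (gf PW PU PV \<tau> x) \<partial>cond_pmf J s)"
        unfolding Yf_def J_def[symmetric] s_def[symmetric]
        by (rule enn_exp_pmf[where B="2 powr \<tau>"]) (rule gf_bnd)+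
      also have "\<dots> = (\<integral>\<^sup>+x. ennreal (gf PW PU PV \<tau> x) \<partial>uniform_measure (measure_pmf J) s)"
        by (simp add: cond_pmf.rep_eq[OF ne])
      also have "\<dots> = (\<integral>\<^sup>+x. ennreal (gf PW PU PV \<tau> x) * indicator s x \<partial>J) / emeasure (measure_pmf J) s"
        by (rule nn_integral_uniform_measure) auto
      also have "emeasure (measure_pmf J) s = ennreal Q"
        using mJ by (simp add: measure_pmf.emeasure_eq_measure)
      also have "(\<integral>\<^sup>+x. ennreal (gf PW PU PV \<tau> x) * indicator s x \<partial>J) = T"
        unfolding T_def J_def joint_nn
      proof (intro nn_integral_cong)
        fix w u
        have "(\<integral>\<^sup>+v'. ennreal (gf PW PU PV \<tau> (w, u, v')) * indicator s (w, u, v') \<partial>PV w u)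
            = (\<integral>\<^sup>+v'. ennreal (gf PW PU PV \<tau> (w, u, v')) * indicator {v} v' \<partial>PV w u)"
          by (intro nn_integral_cong) (simp add: s_def indicator_def)
        also have "\<dots> = ennreal (gf PW PU PV \<tau> (w, u, v)) * ennreal (pmf (PV w u) v)"
          by (simp add: emeasure_pmf_single)
        finally show "(\<integral>\<^sup>+v'. ennreal (gf PW PU PV \<tau> (w, u, v')) * indicator s (w, u, v') \<partial>PV w u)
            = ennreal (gf PW PU PV \<tau> (w, u, v)) * ennreal (pmf (PV w u) v)" .
      qed
      finally show ?thesis .
    qed
    have QT: "ennreal Q * T = ennreal S"
    proof -
      have "ennreal Q * T = (\<integral>\<^sup>+w. \<integral>\<^sup>+u. ennreal Q * (ennreal (gf PW PU PV \<tau> (w, u, v)) * ennreal (pmf (PV w u) v)) \<partial>PU w \<partial>PW)"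
        unfolding T_def by (simp add: nn_integral_cmult[symmetric])
      also have "\<dots> = (\<integral>\<^sup>+w. \<integral>\<^sup>+u. ennreal (pmf PW w * (ka A PV v w u)\<^sup>2) \<partial>PU w \<partial>PW)"
      proof (rule nn_integral_cong_AE)
        have "\<forall>w\<in>set_pmf PW. (\<integral>\<^sup>+u. ennreal Q * (ennreal (gf PW PU PV \<tau> (w, u, v)) * ennreal (pmf (PV w u) v)) \<partial>PU w)
             = (\<integral>\<^sup>+u. ennreal (pmf PW w * (ka A PV v w u)\<^sup>2) \<partial>PU w)"
        proof
          fix w assume "w \<in> set_pmf PW"
          then have pw: "0 < pmf PW w" by (rule pmf_positive)
          show "(\<integral>\<^sup>+u. ennreal Q * (ennreal (gf PW PU PV \<tau> (w, u, v)) * ennreal (pmf (PV w u) v)) \<partial>PU w)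
             = (\<integral>\<^sup>+u. ennreal (pmf PW w * (ka A PV v w u)\<^sup>2) \<partial>PU w)"
          proof (rule nn_integral_cong)
            fix u
            have g0: "0 \<le> gf PW PU PV \<tau> (w, u, v)" by (rule gf_bnd)
            have "Q * gf PW PU PV \<tau> (w, u, v) * pmf (PV w u) v = pmf PW w * (ka A PV v w u)\<^sup>2"
            proof (cases "pmf (PV w u) v = 0")
              case True then show ?thesis by (simp add: ka_def)
            next
              case False
              then have pv: "0 < pmf (PV w u) v" using pmf_nonneg order_le_less by metis
              have "gf PW PU PV \<tau> (w, u, v) = pmf (PV w u) v * pmf PW w / Q * indicator A (w, u, v)"
                unfolding gf_def idens_def selfinfo_def A_def
                using powr_key[OF pw pv Qp] by (simp add: Q_def)
              then show ?thesis using Qp unfolding ka_def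
                by (simp add: indicator_def power2_eq_square)
            qed
            then show "ennreal Q * (ennreal (gf PW PU PV \<tau> (w, u, v)) * ennreal (pmf (PV w u) v)) = ennreal (pmf PW w * (ka A PV v w u)\<^sup>2)"
              using Q0 g0 by (simp add: ennreal_mult[symmetric] mult.assoc)
          qed
        qed
        then show "AE w in measure_pmf PW. (\<integral>\<^sup>+u. ennreal Q * (ennreal (gf PW PU PV \<tau> (w, u, v)) * ennreal (pmf (PV w u) v)) \<partial>PU w)
             = (\<integral>\<^sup>+u. ennreal (pmf PW w * (ka A PV v w u)\<^sup>2) \<partial>PU w)"
          by (simp add: AE_measure_pmf_iff)
      qed
      also have "\<dots> = ennreal S" by (rule Senn[symmetric])
      finally show ?thesis .
    qed
    have "T = ennreal S / ennreal Q"
      using QT Qp by (metis ennreal_mult_divide_eq mult.commute ennreal_eq_0_iff ennreal_neq_top not_le)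
    also have "\<dots> = ennreal (S / Q)" using S0 Qp by (rule divide_ennreal)
    finally have "ennreal (Yf PW PU PV \<tau> v) = ennreal (S / Q / Q)"
      using Yenn Qp S0 by (simp add: divide_ennreal)
    then have Y: "Yf PW PU PV \<tau> v = S / Q / Q"
      using Yf_bnd(1)[of PW PU PV \<tau> v] S0 Qp by (subst (asm) ennreal_inj) auto
    have "sqrt S = Q * sqrt (Yf PW PU PV \<tau> v)"
      using Qp S0 unfolding Y by (simp add: real_sqrt_divide)
    then show ?thesis unfolding S_def A_def Q_def by simp
  qed
qed


theorem theorem2:
  fixes PW :: "'w::countable pmf"
    and PU :: "'w \<Rightarrow> 'u::countable pmf"
    and PV :: "'w \<Rightarrow> 'u \<Rightarrow> 'v::countable pmf"
    and \<tau> :: real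
  shows "(\<integral>\<^sup>+ c. ennreal (tv_dist (induced_PV PW PV c) (pmf (marg_V PW PU PV))) \<partial>codebook PU)
           \<le> ennreal (measure_pmf.prob (joint_pmf PW PU PV) (- A_set PW PU PV \<tau>) + delta PW PU PV \<tau>)
         \<and> delta PW PU PV \<tau> \<le> 1 / 2 * 2 powr (\<tau> / 2)"
proof
  show "delta PW PU PV \<tau> \<le> 1 / 2 * 2 powr (\<tau> / 2)" by (rule delta_bnd)
next
  define M where "M = codebook PU"
  define A where "A = A_set PW PU PV \<tau>"
  define Q where "Q = marg_V PW PU PV"
  define q1 where "q1 v = measure_pmf.expectation PW (\<lambda>w. measure_pmf.expectation (PU w) (ka A PV v w))" for v
  define q2 where "q2 v = measure_pmf.expectation PW (\<lambda>w. measure_pmf.expectation (PU w) (ka (- A) PV v w))" for v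
  define S where "S v = measure_pmf.expectation PW (\<lambda>w. pmf PW w * measure_pmf.expectation (PU w) (\<lambda>u. (ka A PV v w u)\<^sup>2))" for v
  define F where "F v c = ennreal \<bar>Xf PW (ka A PV v) c - q1 v\<bar> + ennreal (Xf PW (ka (- A) PV v) c) + ennreal (q2 v)" for v c
  define Y where "Y v = Yf PW PU PV \<tau> v" for v
  interpret MP: prob_space M unfolding M_def by (rule prob_codebook)
  note Xm[measurable] = Xf_meas[where PU=PU and PW=PW, folded M_def]
  have q1_0: "0 \<le> q1 v" for v unfolding q1_def by (rule q_nonneg) (rule ka01)+
  have q2_0: "0 \<le> q2 v" for v unfolding q2_def by (rule q_nonneg) (rule ka01)+
  have X0: "0 \<le> Xf PW (ka B PV v) c" for B v c
  proof -
    have "0 \<le> Xf PW (ka B PV v) c \<and> Xf PW (ka B PV v) c \<le> 1" by (rule Xf_01) (rule ka01)+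
    then show ?thesis by simp
  qed
  have Fm: "(\<lambda>c. F v c) \<in> borel_measurable M" for v unfolding F_def by measurable
  have step1: "ennreal (tv_dist (induced_PV PW PV c) (pmf Q)) \<le> (\<integral>\<^sup>+v. ennreal (1/2) * F v c \<partial>count_space UNIV)" for c
  proof -
    have pt: "\<bar>induced_PV PW PV c v - pmf Q v\<bar> \<le> \<bar>Xf PW (ka A PV v) c - q1 v\<bar> + Xf PW (ka (- A) PV v) c + q2 v" for v
      using induced_split[of PW PV c v A] marg_split[of PW PU PV v A] X0[of "- A" v c] q2_0[of v]
      unfolding Q_def q1_def q2_def by linarith
    have "ennreal (infsum (\<lambda>v. \<bar>induced_PV PW PV c v - pmf Q v\<bar>) UNIV)
        \<le> (\<integral>\<^sup>+v. ennreal \<bar>induced_PV PW PV c v - pmf Q v\<bar> \<partial>count_space UNIV)"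
      by (rule infsum_le_nn) simp
    also have "\<dots> \<le> (\<integral>\<^sup>+v. F v c \<partial>count_space UNIV)"
    proof (rule nn_integral_mono)
      fix v
      have "ennreal \<bar>induced_PV PW PV c v - pmf Q v\<bar> \<le> ennreal (\<bar>Xf PW (ka A PV v) c - q1 v\<bar> + Xf PW (ka (- A) PV v) c + q2 v)"
        using pt by (rule ennreal_leI)
      also have "\<dots> = F v c" unfolding F_def using X0[of "- A" v c] q2_0[of v]
        by (simp add: ennreal_plus)
      finally show "ennreal \<bar>induced_PV PW PV c v - pmf Q v\<bar> \<le> F v c" .
    qed
    finally have "ennreal (infsum (\<lambda>v. \<bar>induced_PV PW PV c v - pmf Q v\<bar>) UNIV) \<le> (\<integral>\<^sup>+v. F v c \<partial>count_space UNIV)" .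
    then have "ennreal (1/2) * ennreal (infsum (\<lambda>v. \<bar>induced_PV PW PV c v - pmf Q v\<bar>) UNIV) \<le> ennreal (1/2) * (\<integral>\<^sup>+v. F v c \<partial>count_space UNIV)"
      by (rule mult_left_mono) simp
    moreover have "0 \<le> infsum (\<lambda>v. \<bar>induced_PV PW PV c v - pmf Q v\<bar>) UNIV" by (rule infsum_nonneg) simp
    then have e1: "ennreal (infsum (\<lambda>v. \<bar>induced_PV PW PV c v - pmf Q v\<bar>) UNIV / 2) = ennreal (1/2) * ennreal (infsum (\<lambda>v. \<bar>induced_PV PW PV c v - pmf Q v\<bar>) UNIV)"
      by (subst ennreal_mult[symmetric]) auto
    have e2: "(\<integral>\<^sup>+v. ennreal (1/2) * F v c \<partial>count_space UNIV) = ennreal (1/2) * (\<integral>\<^sup>+v. F v c \<partial>count_space UNIV)"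
      by (rule nn_integral_cmult) simp
    ultimately show ?thesis
      unfolding tv_dist_def e1 e2 by simp
  qed
  have step2: "(\<integral>\<^sup>+c. F v c \<partial>M) \<le> ennreal (sqrt (S v)) + ennreal (q2 v) + ennreal (q2 v)" for v
  proof -
    have "(\<integral>\<^sup>+c. F v c \<partial>M) = (\<integral>\<^sup>+c. ennreal \<bar>Xf PW (ka A PV v) c - q1 v\<bar> \<partial>M) + (\<integral>\<^sup>+c. ennreal (Xf PW (ka (- A) PV v) c) \<partial>M) + (\<integral>\<^sup>+c. ennreal (q2 v) \<partial>M)"
      unfolding F_def by (simp add: nn_integral_add)
    also have "(\<integral>\<^sup>+c. ennreal (q2 v) \<partial>M) = ennreal (q2 v)" by (simp add: MP.emeasure_space_1)
    also have "(\<integral>\<^sup>+c. ennreal (Xf PW (ka (- A) PV v) c) \<partial>M) = ennreal (q2 v)"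
      unfolding M_def q2_def by (rule Xf_mean) (rule ka01)+
    also have "(\<integral>\<^sup>+c. ennreal \<bar>Xf PW (ka A PV v) c - q1 v\<bar> \<partial>M) \<le> ennreal (sqrt (S v))"
      unfolding M_def q1_def S_def by (rule Xf_dev) (rule ka01)+
    finally show ?thesis by (simp add: add_right_mono)
  qed
  have SY': "sqrt (S v) \<le> pmf Q v * sqrt (Y v)" for v
    unfolding S_def Q_def Y_def A_def by (rule SY)
  have Y0: "0 \<le> Y v" "Y v \<le> 2 powr \<tau>" for v unfolding Y_def by (rule Yf_bnd)+
  have S0: "0 \<le> S v" for v
  proof -
    have "0 \<le> pmf PW w * measure_pmf.expectation (PU w) (\<lambda>u. (ka A PV v w u)\<^sup>2)" for w
      using exp01[of "\<lambda>u. (ka A PV v w u)\<^sup>2" "PU w"] ka01[of A PV v w] by (auto simp: power_le_one)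
    then show ?thesis unfolding S_def by (intro integral_nonneg_AE) auto
  qed
  have step3: "ennreal (1/2) * (ennreal (sqrt (S v)) + ennreal (q2 v) + ennreal (q2 v))
      \<le> ennreal (pmf Q v) * ennreal (1/2 * sqrt (Y v)) + ennreal (q2 v)" for v
  proof -
    have "ennreal (sqrt (S v) + q2 v + q2 v) = ennreal (sqrt (S v) + q2 v) + ennreal (q2 v)"
      by (rule ennreal_plus) (use q2_0[of v] S0[of v] in auto)
    also have "ennreal (sqrt (S v) + q2 v) = ennreal (sqrt (S v)) + ennreal (q2 v)"
      by (rule ennreal_plus) (use q2_0[of v] S0[of v] in auto)
    finally have e1: "ennreal (sqrt (S v)) + ennreal (q2 v) + ennreal (q2 v) = ennreal (sqrt (S v) + q2 v + q2 v)" ..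
    have e2: "ennreal (1/2 * (sqrt (S v) + q2 v + q2 v)) = ennreal (1/2) * ennreal (sqrt (S v) + q2 v + q2 v)"
      by (rule ennreal_mult) (use q2_0[of v] S0[of v] in auto)
    have e3: "ennreal (pmf Q v * (1/2 * sqrt (Y v)) + q2 v) = ennreal (pmf Q v * (1/2 * sqrt (Y v))) + ennreal (q2 v)"
      by (rule ennreal_plus) (use q2_0[of v] Y0[of v] in auto)
    have e4: "ennreal (pmf Q v * (1/2 * sqrt (Y v))) = ennreal (pmf Q v) * ennreal (1/2 * sqrt (Y v))"
      by (rule ennreal_mult) (use Y0[of v] in auto)
    have "1/2 * (sqrt (S v) + q2 v + q2 v) \<le> pmf Q v * (1/2 * sqrt (Y v)) + q2 v"
      using SY'[of v] by simp
    then have "ennreal (1/2 * (sqrt (S v) + q2 v + q2 v)) \<le> ennreal (pmf Q v * (1/2 * sqrt (Y v)) + q2 v)"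
      by (rule ennreal_leI)
    then show ?thesis unfolding e1 e2 e3 e4 .
  qed
  have "(\<integral>\<^sup>+ c. ennreal (tv_dist (induced_PV PW PV c) (pmf Q)) \<partial>M)
      \<le> (\<integral>\<^sup>+c. \<integral>\<^sup>+v. ennreal (1/2) * F v c \<partial>count_space UNIV \<partial>M)"
    by (rule nn_integral_mono) (rule step1)
  also have "\<dots> = (\<integral>\<^sup>+v. \<integral>\<^sup>+c. ennreal (1/2) * F v c \<partial>M \<partial>count_space UNIV)"
    by (rule nn_integral_count_space_nn_integral) (use Fm in auto)
  also have "\<dots> = (\<integral>\<^sup>+v. ennreal (1/2) * (\<integral>\<^sup>+c. F v c \<partial>M) \<partial>count_space UNIV)"
    by (intro nn_integral_cong nn_integral_cmult Fm)
  also have "\<dots> \<le> (\<integral>\<^sup>+v. ennreal (pmf Q v) * ennreal (1/2 * sqrt (Y v)) + ennreal (q2 v) \<partial>count_space UNIV)"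
    by (intro nn_integral_mono order_trans[OF mult_left_mono[OF step2] step3]) simp
  also have "\<dots> = (\<integral>\<^sup>+v. ennreal (1/2 * sqrt (Y v)) \<partial>Q) + (\<integral>\<^sup>+v. ennreal (q2 v) \<partial>count_space UNIV)"
    by (simp add: nn_integral_add nn_integral_measure_pmf)
  also have "(\<integral>\<^sup>+v. ennreal (1/2 * sqrt (Y v)) \<partial>Q) = ennreal (delta PW PU PV \<tau>)"
  proof -
    have "(\<integral>\<^sup>+v. ennreal (1/2 * sqrt (Y v)) \<partial>Q) = ennreal (measure_pmf.expectation Q (\<lambda>v. 1/2 * sqrt (Y v)))"
    proof (rule enn_exp_pmf[where B="sqrt (2 powr \<tau>)", symmetric])
      fix v
      have "sqrt (Y v) \<le> sqrt (2 powr \<tau>)" using Y0[of v] by simp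
      moreover have "0 \<le> sqrt (Y v)" using Y0[of v] by simp
      ultimately show "1/2 * sqrt (Y v) \<le> sqrt (2 powr \<tau>)" by linarith
      show "0 \<le> 1/2 * sqrt (Y v)" using Y0[of v] by simp
    qed
    also have "measure_pmf.expectation Q (\<lambda>v. 1/2 * sqrt (Y v)) = delta PW PU PV \<tau>"
      unfolding delta_eq Q_def Y_def by simp
    finally show ?thesis .
  qed
  also have "(\<integral>\<^sup>+v. ennreal (q2 v) \<partial>count_space UNIV) = ennreal (measure_pmf.prob (joint_pmf PW PU PV) (- A))"
    unfolding q2_def by (simp add: sum_q measure_pmf.emeasure_eq_measure)
  finally have main: "(\<integral>\<^sup>+ c. ennreal (tv_dist (induced_PV PW PV c) (pmf Q)) \<partial>M)
      \<le> ennreal (delta PW PU PV \<tau>) + ennreal (measure_pmf.prob (joint_pmf PW PU PV) (- A))" .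
  have d0: "0 \<le> delta PW PU PV \<tau>" unfolding delta_eq
    by (simp add: integral_nonneg_AE Yf_bnd)
  have "ennreal (delta PW PU PV \<tau>) + ennreal (measure_pmf.prob (joint_pmf PW PU PV) (- A))
      = ennreal (measure_pmf.prob (joint_pmf PW PU PV) (- A) + delta PW PU PV \<tau>)"
    using d0 by (simp add: ennreal_plus add.commute)
  then show "(\<integral>\<^sup>+ c. ennreal (tv_dist (induced_PV PW PV c) (pmf (marg_V PW PU PV))) \<partial>codebook PU)
           \<le> ennreal (measure_pmf.prob (joint_pmf PW PU PV) (- A_set PW PU PV \<tau>) + delta PW PU PV \<tau>)"
    using main unfolding M_def Q_def A_def by simp
qed

end
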